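(* For $n\ge0$ define $$\mathbb{P}_\infty^{(n)}:=\int_0^\infty\left[1-\Gamma\!\left(\frac{1}{2(1-\beta)},\frac{x_0^{2(1-\beta)}}{2r(1-\beta)^2}\right)\right]\frac{y_0}{\nu r^{3/2}\sqrt{2\pi}}\sum_{k=0}^n\frac{1}{k!}\left(-\frac{y_0^2}{2\nu^2r}\right)^k\mathrm{d}r,$$ and $$b_n:=\frac{2y_0(1-\beta)}{\Gamma\!\left(\frac{1}{2(1-\beta)}\right)\nu\sqrt{\pi}x_0^{1-\beta}}\left(\frac{y_0^2(1-\beta)^2}{\nu^2x_0^{2(1-\beta)}}\right)^n\frac{\Gamma\!\left(n+1+\frac{\beta}{2-2\beta}\right)}{n!(1+2n)}.$$ Then these integrals are finite, $\mathbb{P}_\infty^{(n)}=\sum_{k=0}^n(-1)^kb_k$, and $|\mathbb{P}_\infty-\mathbb{P}_\infty^{(n)}|\le b_{n+1}$ for every $n\ge0$. In particular $$\mathbb{P}_\infty^{(0)}=\frac{2\Gamma\!\left(1+\frac{\beta}{2-2\beta}\right)}{\Gamma\!\left(\frac{1}{2-2\beta}\right)}\frac{y_0(1-\beta)}{\nu\sqrt{\pi}x_0^{1-\beta}}.$$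
   Context: Parameters $x_0,y_0,\nu>0$, $\beta\in[0,1)$. $\Gamma(v,x):=\Gamma(v)^{-1}\int_0^xu^{v-1}e^{-u}\,\mathrm{d}u$ is the normalised lower incomplete Gamma function, $\Gamma(\cdot)$ the Euler Gamma function. $\mathbb{P}_\infty:=\frac{y_0}{\nu\sqrt{2\pi}}\int_0^\infty\left[1-\Gamma\!\left(\frac{1}{2(1-\beta)},\frac{x_0^{2(1-\beta)}}{2r(1-\beta)^2}\right)\right]r^{-3/2}\exp\!\left(-\frac{y_0^2}{2\nu^2r}\right)\mathrm{d}r$, which equals the large-time limit $\lim_{t\to\infty}\mathbb{P}(X_t=0)$ of the mass at zero in the uncorrelated SABR model $\mathrm{d}X_t=Y_tX_t^\beta\mathrm{d}W_t$, $\mathrm{d}Y_t=\nu Y_t\mathrm{d}Z_t$ ($W,Z$ independent, origin absorbing). *)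

theory Defs
  imports "HOL-Analysis.Analysis"
begin

definition lower_gamma_reg :: "real \<Rightarrow> real \<Rightarrow> real" where
  "lower_gamma_reg v x = (LBINT u=0..x. u powr (v - 1) * exp (- u)) / Gamma v"

definition sabr_F :: "real \<Rightarrow> real \<Rightarrow> real \<Rightarrow> real" where
  "sabr_F x0 \<beta> r = 1 - lower_gamma_reg (1 / (2 * (1 - \<beta>)))
      (x0 powr (2 * (1 - \<beta>)) / (2 * r * (1 - \<beta>)^2))"

definition Pinf_integrand :: "real \<Rightarrow> real \<Rightarrow> real \<Rightarrow> real \<Rightarrow> real \<Rightarrow> real" where
  "Pinf_integrand x0 y0 \<nu> \<beta> r =
     y0 / (\<nu> * sqrt (2 * pi)) * sabr_F x0 \<beta> r * r powr (-3/2) * exp (- (y0^2 / (2 * \<nu>^2 * r)))"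

definition P_inf :: "real \<Rightarrow> real \<Rightarrow> real \<Rightarrow> real \<Rightarrow> real" where
  "P_inf x0 y0 \<nu> \<beta> = (LBINT r:{0<..}. Pinf_integrand x0 y0 \<nu> \<beta> r)"

definition Pn_integrand :: "real \<Rightarrow> real \<Rightarrow> real \<Rightarrow> real \<Rightarrow> nat \<Rightarrow> real \<Rightarrow> real" where
  "Pn_integrand x0 y0 \<nu> \<beta> n r =
     sabr_F x0 \<beta> r * (y0 / (\<nu> * r powr (3/2) * sqrt (2 * pi)))
       * (\<Sum>k=0..n. 1 / fact k * (- (y0^2 / (2 * \<nu>^2 * r))) ^ k)"

definition P_n :: "real \<Rightarrow> real \<Rightarrow> real \<Rightarrow> real \<Rightarrow> nat \<Rightarrow> real" where
  "P_n x0 y0 \<nu> \<beta> n = (LBINT r:{0<..}. Pn_integrand x0 y0 \<nu> \<beta> n r)"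

definition b_coef :: "real \<Rightarrow> real \<Rightarrow> real \<Rightarrow> real \<Rightarrow> nat \<Rightarrow> real" where
  "b_coef x0 y0 \<nu> \<beta> n =
     2 * y0 * (1 - \<beta>) / (Gamma (1 / (2 * (1 - \<beta>))) * \<nu> * sqrt pi * x0 powr (1 - \<beta>))
     * (y0^2 * (1 - \<beta>)^2 / (\<nu>^2 * x0 powr (2 * (1 - \<beta>)))) ^ n
     * Gamma (real n + 1 + \<beta> / (2 - 2 * \<beta>)) / (fact n * (1 + 2 * real n))"

end

theory Submission
  imports Defs
begin

definition gG :: "real \<Rightarrow> real \<Rightarrow> real" where
  "gG a u = u powr (a - 1) / exp u"

lemma gG_meas[measurable]: "gG a \<in> borel_measurable borel"
  unfolding gG_def by measurable

lemma gG_nonneg: "0 \<le> gG a u"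
  unfolding gG_def by simp

lemma Gamma_nn: "a > 0 \<Longrightarrow> (\<integral>\<^sup>+u. ennreal (indicator {0..} u * gG a u) \<partial>lborel) = ennreal (Gamma a)"
  using Gamma_conv_nn_integral_real[of a] unfolding gG_def by (simp add: mult.assoc times_divide_eq_right)

lemma Gamma_int: assumes "a > 0" shows "set_integrable lborel {0..} (gG a)"
  unfolding set_integrable_def
  apply (rule integrableI_nonneg)
  using Gamma_nn[OF assms] by (auto simp: gG_nonneg)

lemma Gamma_lint: assumes "a > 0" shows "(LINT u:{0..}|lborel. gG a u) = Gamma a"
proof -
  have "ennreal (LINT u:{0..}|lborel. gG a u) = ennreal (Gamma a)"
    using Gamma_int[OF assms] Gamma_nn[OF assms] unfolding set_integrable_def set_lebesgue_integral_def
    by (subst nn_integral_eq_integral[symmetric]) (auto simp: gG_nonneg)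
  moreover have "0 \<le> (LINT u:{0..}|lborel. gG a u)"
    unfolding set_lebesgue_integral_def by (auto intro!: integral_nonneg_AE simp: gG_nonneg)
  ultimately show ?thesis using Gamma_real_pos[OF assms] by simp
qed

lemma lower_gamma_split:
  assumes a: "a > 0" and s: "s > 0"
  shows "Gamma a * (1 - lower_gamma_reg a s) = (LINT u:{s<..}|lborel. gG a u)"
proof -
  have I: "set_integrable lborel {0..} (gG a)" by (rule Gamma_int[OF a])
  have e: "(LBINT u=0..s. u powr (a - 1) * exp (- u)) = (LINT u:{0..s}|lborel. gG a u)"
    using interval_integral_Icc[of 0 s "\<lambda>u. u powr (a - 1) * exp (- u)"] s
    by (simp add: zero_ereal_def gG_def exp_minus divide_inverse)
  have "Gamma a = (LINT u:{0..}|lborel. gG a u)" using Gamma_lint[OF a] by simp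
  also have "{0..} = {0..s} \<union> {s<..}" using s by auto
  also have "(LINT u:{0..s} \<union> {s<..}|lborel. gG a u) = (LINT u:{0..s}|lborel. gG a u) + (LINT u:{s<..}|lborel. gG a u)"
    using s by (intro set_integral_Un) (auto intro!: set_integrable_subset[OF I])
  finally show ?thesis using Gamma_real_pos[OF a] unfolding lower_gamma_reg_def e
    by (simp add: field_simps)
qed

lemma upper_nn:
  assumes a: "a > 0" and s: "s > 0"
  shows "ennreal (Gamma a * (1 - lower_gamma_reg a s)) = (\<integral>\<^sup>+u. ennreal (indicator {s<..} u * gG a u) \<partial>lborel)"
proof -
  have I: "set_integrable lborel {s<..} (gG a)" using s by (auto intro: set_integrable_subset[OF Gamma_int[OF a]])
  show ?thesis unfolding lower_gamma_split[OF a s]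
    using I unfolding set_integrable_def set_lebesgue_integral_def
    by (subst nn_integral_eq_integral) (auto simp: gG_nonneg)
qed

lemma upper_nonneg:
  assumes a: "a > 0" and s: "s > 0"
  shows "0 \<le> 1 - lower_gamma_reg a s"
proof -
  have "0 \<le> (LINT u:{s<..}|lborel. gG a u)"
    unfolding set_lebesgue_integral_def by (auto intro!: integral_nonneg_AE simp: gG_nonneg)
  then have "0 \<le> Gamma a * (1 - lower_gamma_reg a s)" using lower_gamma_split[OF a s] by simp
  then show ?thesis using Gamma_real_pos[OF a] by (simp add: zero_le_mult_iff)
qed

definition JJ :: "real \<Rightarrow> real \<Rightarrow> real \<Rightarrow> real \<Rightarrow> real \<Rightarrow> ennreal" where
  "JJ a c p r u = ennreal (if 0 < r \<and> c < r * u then gG a u * r powr (-p) else 0)"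

lemma JJ_meas[measurable]: "(\<lambda>(r, u). JJ a c p r u) \<in> borel_measurable (lborel \<Otimes>\<^sub>M lborel)"
  unfolding JJ_def by measurable

lemma JJ_inner_r:
  assumes a: "a > 0" and c: "c > 0" and r: "r > 0"
  shows "ennreal (Gamma a * (1 - lower_gamma_reg a (c / r)) * r powr (-p)) = (\<integral>\<^sup>+u. JJ a c p r u \<partial>lborel)"
proof -
  have "ennreal (Gamma a * (1 - lower_gamma_reg a (c / r)) * r powr (-p))
     = ennreal (Gamma a * (1 - lower_gamma_reg a (c / r))) * ennreal (r powr (-p))"
    by (rule ennreal_mult'') simp
  also have "\<dots> = (\<integral>\<^sup>+u. ennreal (indicator {c/r<..} u * gG a u) \<partial>lborel) * ennreal (r powr (-p))"
    using c r by (subst upper_nn[OF a]) auto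
  also have "\<dots> = (\<integral>\<^sup>+u. ennreal (indicator {c/r<..} u * gG a u) * ennreal (r powr (-p)) \<partial>lborel)"
    by (rule nn_integral_multc[symmetric]) measurable
  also have "\<dots> = (\<integral>\<^sup>+u. JJ a c p r u \<partial>lborel)"
  proof (rule nn_integral_cong)
    fix u
    have "c / r < u \<longleftrightarrow> c < r * u" using r by (simp add: divide_less_eq mult.commute)
    then show "ennreal (indicator {c/r<..} u * gG a u) * ennreal (r powr (-p)) = JJ a c p r u"
      unfolding JJ_def using r by (auto simp: ennreal_mult'[symmetric] gG_nonneg indicator_def)
  qed
  finally show ?thesis .
qed

lemma powr_tail_nn:
  assumes t: "t > 0" and p: "p > 1"
  shows "(\<integral>\<^sup>+r. ennreal (indicator {t<..} r * r powr (-p)) \<partial>lborel) = ennreal (t powr (1 - p) / (p - 1))"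
proof -
  have h: "((\<lambda>x. x powr (-p)) has_integral -(t powr (-p+1)) / (-p+1)) {t..}"
    using has_integral_powr_to_inf[of "-p" t] p t by simp
  have "(\<integral>\<^sup>+r. ennreal (indicator {t<..} r * r powr (-p)) \<partial>lborel)
      = (\<integral>\<^sup>+r. ennreal (r powr (-p)) * indicator {t..} r \<partial>lborel)"
  proof (rule nn_integral_cong_AE)
    show "AE r in lborel. ennreal (indicator {t<..} r * r powr (-p)) = ennreal (r powr (-p)) * indicator {t..} r"
      using AE_lborel_singleton[of t] by eventually_elim (auto simp: indicator_def)
  qed
  also have "\<dots> = ennreal (-(t powr (-p+1)) / (-p+1))"
    by (rule nn_integral_has_integral_lebesgue'[OF _ h]) simp
  also have "-(t powr (-p+1)) / (-p+1) = t powr (1 - p) / (p - 1)"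
    using p by (simp add: field_simps)
  finally show ?thesis .
qed

lemma JJ_inner_u:
  assumes a: "a > 0" and c: "c > 0" and p: "p > 1"
  shows "(\<integral>\<^sup>+r. JJ a c p r u \<partial>lborel) = ennreal (indicator {0<..} u * (c powr (1 - p) / (p - 1)) * gG (a + p - 1) u)"
proof (cases "u > 0")
  case False
  have "JJ a c p r u = 0" for r
  proof -
    have "\<not> (0 < r \<and> c < r * u)" using False c
      by (metis less_le_not_le mult_nonneg_nonpos not_le order.strict_trans2)
    then show ?thesis unfolding JJ_def by (simp only: if_False) simp
  qed
  then show ?thesis using False by simp
next
  case u: True
  have "(\<integral>\<^sup>+r. JJ a c p r u \<partial>lborel) = (\<integral>\<^sup>+r. ennreal (gG a u) * ennreal (indicator {c/u<..} r * r powr (-p)) \<partial>lborel)"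
  proof (rule nn_integral_cong)
    fix r
    have "c / u < r \<longleftrightarrow> c < r * u" using u by (simp add: divide_less_eq)
    moreover have "c / u < r \<Longrightarrow> 0 < r" using u c by (meson divide_pos_pos less_trans)
    ultimately show "JJ a c p r u = ennreal (gG a u) * ennreal (indicator {c/u<..} r * r powr (-p))"
      unfolding JJ_def by (auto simp: ennreal_mult'[symmetric] gG_nonneg indicator_def)
  qed
  also have "\<dots> = ennreal (gG a u) * (\<integral>\<^sup>+r. ennreal (indicator {c/u<..} r * r powr (-p)) \<partial>lborel)"
    by (rule nn_integral_cmult) measurable
  also have "\<dots> = ennreal (gG a u) * ennreal ((c/u) powr (1 - p) / (p - 1))"
    using u c p by (subst powr_tail_nn) auto
  also have "\<dots> = ennreal (gG a u * ((c/u) powr (1 - p) / (p - 1)))"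
    by (rule ennreal_mult'[symmetric]) (simp add: gG_nonneg)
  also have "gG a u * ((c/u) powr (1 - p) / (p - 1)) = (c powr (1 - p) / (p - 1)) * gG (a + p - 1) u"
    using u c unfolding gG_def
    by (simp add: powr_divide powr_minus_divide field_simps powr_add[symmetric] powr_diff)
      (simp add: power2_eq_square algebra_simps)
  finally show ?thesis using u by simp
qed

definition HH :: "real \<Rightarrow> real \<Rightarrow> real \<Rightarrow> real \<Rightarrow> real" where
  "HH a c p r = indicator {0<..} r * (1 - lower_gamma_reg a (c / r)) * r powr (-p)"

lemma HH_nonneg: "a > 0 \<Longrightarrow> c > 0 \<Longrightarrow> 0 \<le> HH a c p r"
  unfolding HH_def by (cases "r > 0") (auto intro!: upper_nonneg mult_nonneg_nonneg)

lemma HH_JJ: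
  assumes a: "a > 0" and c: "c > 0"
  shows "ennreal (Gamma a * HH a c p r) = (\<integral>\<^sup>+u. JJ a c p r u \<partial>lborel)"
proof (cases "r > 0")
  case True
  then show ?thesis using JJ_inner_r[OF a c True, of p] unfolding HH_def by (simp add: mult.assoc)
next
  case False
  then show ?thesis unfolding HH_def JJ_def by simp
qed

lemma HH_meas[measurable]:
  assumes a: "a > 0" and c: "c > 0"
  shows "HH a c p \<in> borel_measurable borel"
proof -
  have "HH a c p = (\<lambda>r. enn2real (\<integral>\<^sup>+u. JJ a c p r u \<partial>lborel) / Gamma a)"
  proof
    fix r
    have "enn2real (\<integral>\<^sup>+u. JJ a c p r u \<partial>lborel) = Gamma a * HH a c p r"
      unfolding HH_JJ[OF a c, symmetric]
      using HH_nonneg[OF a c] Gamma_real_pos[OF a] by simp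
    then show "HH a c p r = enn2real (\<integral>\<^sup>+u. JJ a c p r u \<partial>lborel) / Gamma a"
      using Gamma_real_pos[OF a] by simp
  qed
  also have "\<dots> \<in> borel_measurable borel" by measurable
  finally show ?thesis by simp
qed

lemma HH_nn:
  assumes a: "a > 0" and c: "c > 0" and p: "p > 1"
  shows "(\<integral>\<^sup>+r. ennreal (HH a c p r) \<partial>lborel) = ennreal (c powr (1 - p) / (p - 1) * Gamma (a + p - 1) / Gamma a)"
proof -
  have ga: "Gamma a > 0" using Gamma_real_pos[OF a] .
  have "ennreal (Gamma a) * (\<integral>\<^sup>+r. ennreal (HH a c p r) \<partial>lborel) = (\<integral>\<^sup>+r. ennreal (Gamma a) * ennreal (HH a c p r) \<partial>lborel)"
    by (rule nn_integral_cmult[symmetric]) (use a c in measurable)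
  also have "\<dots> = (\<integral>\<^sup>+r. (\<integral>\<^sup>+u. JJ a c p r u \<partial>lborel) \<partial>lborel)"
    using ga by (intro nn_integral_cong) (simp add: HH_JJ[OF a c, symmetric] ennreal_mult' HH_nonneg[OF a c])
  also have "\<dots> = (\<integral>\<^sup>+u. (\<integral>\<^sup>+r. JJ a c p r u \<partial>lborel) \<partial>lborel)"
    by (rule lborel_pair.Fubini'[symmetric]) measurable
  also have "\<dots> = (\<integral>\<^sup>+u. ennreal (c powr (1 - p) / (p - 1)) * ennreal (indicator {0..} u * gG (a + p - 1) u) \<partial>lborel)"
  proof (rule nn_integral_cong)
    fix u
    have "indicator {0<..} u * gG (a + p - 1) u = indicator {0..} u * gG (a + p - 1) u"
      using a p by (cases "u = 0") (auto simp: gG_def indicator_def)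
    then show "(\<integral>\<^sup>+r. JJ a c p r u \<partial>lborel) = ennreal (c powr (1 - p) / (p - 1)) * ennreal (indicator {0..} u * gG (a + p - 1) u)"
      using JJ_inner_u[OF a c p, of u] p
      by (simp add: ennreal_mult'[symmetric] gG_nonneg mult.assoc mult.left_commute[of "indicator _ _"])
  qed
  also have "\<dots> = ennreal (c powr (1 - p) / (p - 1)) * ennreal (Gamma (a + p - 1))"
    using a p by (subst nn_integral_cmult) (auto simp: Gamma_nn)
  finally have E: "ennreal (Gamma a) * (\<integral>\<^sup>+r. ennreal (HH a c p r) \<partial>lborel)
     = ennreal (c powr (1 - p) / (p - 1) * Gamma (a + p - 1))"
    using p by (simp add: ennreal_mult'[symmetric])
  have one: "ennreal (1 / Gamma a) * ennreal (Gamma a) = 1" using ga by (simp add: ennreal_mult'[symmetric])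
  have "(\<integral>\<^sup>+r. ennreal (HH a c p r) \<partial>lborel) = ennreal (1 / Gamma a) * ennreal (Gamma a) * (\<integral>\<^sup>+r. ennreal (HH a c p r) \<partial>lborel)"
    by (simp add: one)
  also have "\<dots> = ennreal (1 / Gamma a) * ennreal (c powr (1 - p) / (p - 1) * Gamma (a + p - 1))"
    by (simp only: mult.assoc E)
  also have "\<dots> = ennreal (c powr (1 - p) / (p - 1) * Gamma (a + p - 1) / Gamma a)"
    using ga by (simp add: ennreal_mult'[symmetric] mult_ac)
  finally show ?thesis .
qed

lemma HH_int:
  assumes a: "a > 0" and c: "c > 0" and p: "p > 1"
  shows "integrable lborel (HH a c p)"
    and "integral\<^sup>L lborel (HH a c p) = c powr (1 - p) / (p - 1) * Gamma (a + p - 1) / Gamma a"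
proof -
  show I: "integrable lborel (HH a c p)"
    by (rule integrableI_nonneg) (use HH_meas[OF a c] HH_nonneg[OF a c] HH_nn[OF a c p] in auto)
  have "ennreal (integral\<^sup>L lborel (HH a c p)) = ennreal (c powr (1 - p) / (p - 1) * Gamma (a + p - 1) / Gamma a)"
    using HH_nn[OF a c p] nn_integral_eq_integral[OF I] HH_nonneg[OF a c] by simp
  moreover have "0 \<le> integral\<^sup>L lborel (HH a c p)"
    using HH_nonneg[OF a c] by (simp add: integral_nonneg_AE)
  moreover have "0 \<le> c powr (1 - p) / (p - 1) * Gamma (a + p - 1) / Gamma a"
    using a p Gamma_real_pos[of a] Gamma_real_pos[of "a + p - 1"] by simp
  ultimately show "integral\<^sup>L lborel (HH a c p) = c powr (1 - p) / (p - 1) * Gamma (a + p - 1) / Gamma a"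
    by simp
qed

lemma coef_arith:
  fixes X B Y N c :: real and k :: nat
  assumes X: "X > 0" and B: "B > 0" and N: "N > 0" and cdef: "c = X^2 / (2 * B^2)"
  shows "Y / (N * sqrt (2 * pi)) * (1 / fact k * (- (Y^2 / (2 * N^2))) ^ k)
         * (c powr (1 - (real k + 3/2)) / (real k + 3/2 - 1) * G / Ga)
       = (-1)^k * (2 * Y * B / (Ga * N * sqrt pi * X) * (Y^2 * B^2 / (N^2 * X^2)) ^ k
           * G / (fact k * (1 + 2 * real k)))"
proof -
  have c: "c > 0" using X B cdef by simp
  have sc: "sqrt c = X / (sqrt 2 * B)"
    using X B unfolding cdef by (simp add: real_sqrt_divide real_sqrt_mult)
  have cp: "c powr (1 - (real k + 3/2)) = inverse (c ^ k) / sqrt c"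
  proof -
    have "1 - (real k + 3/2) = - (real k + 1/2)" by simp
    then have "c powr (1 - (real k + 3/2)) = inverse (c powr real k * c powr (1/2))"
      using c by (simp only: powr_minus powr_add)
    also have "\<dots> = inverse (c ^ k) / sqrt c"
      using c by (simp only: powr_realpow[OF c] powr_half_sqrt[OF less_imp_le[OF c]] inverse_mult_distrib) (simp add: divide_inverse)
    finally show ?thesis .
  qed
  have ck: "inverse (c ^ k) = (2 * B^2 / X^2) ^ k" unfolding cdef by (metis inverse_divide power_inverse)
  have m: "(- (Y^2 / (2 * N^2))) ^ k = (-1)^k * (Y^2 / (2 * N^2)) ^ k"
    by (rule power_minus)
  have pr0: "(Y^2 / (2 * N^2)) * (2 * B^2 / X^2) = (Y^2 * B^2 / (N^2 * X^2))"
    using N X by (simp add: field_simps)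
  have pr: "(Y^2 / (2 * N^2)) ^ k * (2 * B^2 / X^2) ^ k = (Y^2 * B^2 / (N^2 * X^2)) ^ k"
    by (metis pr0 power_mult_distrib)
  have s2: "sqrt (2 * pi) = sqrt 2 * sqrt pi" by (simp add: real_sqrt_mult)
  have s22: "sqrt 2 * sqrt 2 = (2::real)" by simp
  have fk: "fact k > (0::real)" by simp
  define U where "U = (Y^2 / (2 * N^2)) ^ k"
  define V where "V = (2 * B^2 / X^2) ^ k"
  have k32: "real k + 3/2 - 1 = (1 + 2 * real k) / 2" by simp
  show ?thesis
    unfolding cp sc ck m s2 pr[symmetric] U_def[symmetric] V_def[symmetric] k32
    using X B N fk s22
    by (simp add: field_simps)
qed

lemma exp_taylor_bound:
  fixes x :: real
  assumes x: "x \<ge> 0"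
  shows "\<bar>exp (- x) - (\<Sum>k=0..n. 1 / fact k * (- x) ^ k)\<bar> \<le> x ^ (n + 1) / fact (n + 1)"
proof (cases "x = 0")
  case True
  have "(\<Sum>k=0..n. 1 / fact k * (0::real) ^ k) = 1"
    by (induction n) (auto simp: sum.atLeast0_atMost_Suc)
  then show ?thesis using True by simp
next
  case False
  then have h: "- x < 0" using x by simp
  obtain t where t: "- x < t" "t < 0"
    and e: "exp (- x) = (\<Sum>m<Suc n. exp 0 / fact m * (- x) ^ m) + exp t / fact (Suc n) * (- x) ^ Suc n"
    using Maclaurin_minus[OF h, of "Suc n" "\<lambda>_. exp" exp] by (auto intro: DERIV_exp)
  have s: "(\<Sum>m<Suc n. exp 0 / fact m * (- x) ^ m) = (\<Sum>k=0..n. 1 / fact k * (- x) ^ k)"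
    by (simp add: lessThan_Suc_atMost atLeast0AtMost)
  have "\<bar>exp (- x) - (\<Sum>k=0..n. 1 / fact k * (- x) ^ k)\<bar> = exp t / fact (Suc n) * x ^ Suc n"
    unfolding e s using x by (simp add: abs_mult power_abs)
  also have "\<dots> \<le> 1 / fact (Suc n) * x ^ Suc n"
    using t x by (intro mult_right_mono divide_right_mono) auto
  finally show ?thesis by simp
qed

lemma term_eq:
  fixes r y0 \<nu> :: real
  assumes r: "r > 0" and nu: "\<nu> > 0"
  shows "y0 / (\<nu> * r powr (3/2) * sqrt (2 * pi)) * (1 / fact k * (- (y0^2 / (2 * \<nu>^2 * r))) ^ k)
       = (y0 / (\<nu> * sqrt (2 * pi)) * (1 / fact k * (- (y0^2 / (2 * \<nu>^2))) ^ k)) * r powr (- (real k + 3/2))"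
proof -
  have rp: "r powr (- (real k + 3/2)) = inverse (r powr (3/2) * r ^ k)"
    using r by (simp only: powr_minus powr_add powr_realpow[OF r] mult.commute)
  have q: "(- (y0^2 / (2 * \<nu>^2 * r))) ^ k = (- (y0^2 / (2 * \<nu>^2))) ^ k / r ^ k"
    using r by (simp add: power_divide[symmetric] field_simps)
  show ?thesis unfolding rp q using r nu by (simp add: field_simps)
qed

theorem mainTheorem7:
  fixes x0 y0 \<nu> \<beta> :: real
  assumes "x0 > 0" and "y0 > 0" and "\<nu> > 0" and "0 \<le> \<beta>" and "\<beta> < 1"
  shows "(\<forall>n. set_integrable lborel {0<..} (Pn_integrand x0 y0 \<nu> \<beta> n))
    \<and> (\<forall>n. P_n x0 y0 \<nu> \<beta> n = (\<Sum>k=0..n. (-1)^k * b_coef x0 y0 \<nu> \<beta> k))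
    \<and> (\<forall>n. \<bar>P_inf x0 y0 \<nu> \<beta> - P_n x0 y0 \<nu> \<beta> n\<bar> \<le> b_coef x0 y0 \<nu> \<beta> (n + 1))
    \<and> P_n x0 y0 \<nu> \<beta> 0 =
        2 * Gamma (1 + \<beta> / (2 - 2 * \<beta>)) / Gamma (1 / (2 - 2 * \<beta>))
        * (y0 * (1 - \<beta>) / (\<nu> * sqrt pi * x0 powr (1 - \<beta>)))"
proof -
  note x0 = \<open>x0 > 0\<close> and y0 = \<open>y0 > 0\<close> and nu = \<open>\<nu> > 0\<close> and b0 = \<open>0 \<le> \<beta>\<close> and b1 = \<open>\<beta> < 1\<close>
  define B where "B = 1 - \<beta>"
  have B: "B > 0" using b1 by (simp add: B_def)
  define a where "a = 1 / (2 * (1 - \<beta>))"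
  have a: "a > 0" using B by (simp add: a_def B_def[symmetric])
  define X where "X = x0 powr (1 - \<beta>)"
  have X: "X > 0" using x0 by (simp add: X_def)
  have X2: "x0 powr (2 * (1 - \<beta>)) = X^2"
    unfolding X_def using x0 by (simp add: powr_realpow[symmetric] powr_powr mult.commute)
  define c where "c = x0 powr (2 * (1 - \<beta>)) / (2 * (1 - \<beta>)^2)"
  have c: "c > 0" using x0 B by (simp add: c_def B_def[symmetric])
  have cX: "c = X^2 / (2 * B^2)" unfolding c_def X2 B_def ..
  define p where "p = (\<lambda>k::nat. real k + 3/2)"
  have p1: "p k > 1" for k unfolding p_def by simp
  define A where "A = (\<lambda>k::nat. y0 / (\<nu> * sqrt (2 * pi)) * (1 / fact k * (- (y0^2 / (2 * \<nu>^2))) ^ k))"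
  define C where "C = (\<lambda>k. c powr (1 - p k) / (p k - 1) * Gamma (a + p k - 1) / Gamma a)"
  have F_eq: "sabr_F x0 \<beta> r = 1 - lower_gamma_reg a (c / r)" for r
  proof -
    have "x0 powr (2 * (1 - \<beta>)) / (2 * r * (1 - \<beta>)^2) = c / r"
      unfolding c_def by (simp add: field_simps)
    then show ?thesis unfolding sabr_F_def a_def by simp
  qed
  have HHint: "integrable lborel (HH a c (p k))" for k using HH_int(1)[OF a c p1] .
  have HHval: "integral\<^sup>L lborel (HH a c (p k)) = C k" for k using HH_int(2)[OF a c p1] by (simp add: C_def)
  have AC: "A k * C k = (-1)^k * b_coef x0 y0 \<nu> \<beta> k" for k
  proof -
    have g: "a + p k - 1 = real k + 1 + \<beta> / (2 - 2 * \<beta>)"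
      unfolding a_def p_def using b1 by (simp add: field_simps)
    have "A k * C k = (-1)^k * (2 * y0 * B / (Gamma a * \<nu> * sqrt pi * X) * (y0^2 * B^2 / (\<nu>^2 * X^2)) ^ k
           * Gamma (a + p k - 1) / (fact k * (1 + 2 * real k)))"
      unfolding A_def C_def p_def using coef_arith[OF X B nu cX] by simp
    also have "\<dots> = (-1)^k * b_coef x0 y0 \<nu> \<beta> k"
      unfolding g unfolding b_coef_def X2 B_def X_def a_def by simp
    finally show ?thesis .
  qed
  have G2: "(\<lambda>r. indicator {0<..} r *\<^sub>R Pn_integrand x0 y0 \<nu> \<beta> n r) = (\<lambda>r. \<Sum>k=0..n. A k * HH a c (p k) r)" for n
  proof
    fix r :: real
    show "indicator {0<..} r *\<^sub>R Pn_integrand x0 y0 \<nu> \<beta> n r = (\<Sum>k=0..n. A k * HH a c (p k) r)"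
    proof (cases "r > 0")
      case False
      then show ?thesis by (simp add: HH_def)
    next
      case r: True
      have "Pn_integrand x0 y0 \<nu> \<beta> n r = (\<Sum>k=0..n. sabr_F x0 \<beta> r * (y0 / (\<nu> * r powr (3/2) * sqrt (2 * pi)) * (1 / fact k * (- (y0^2 / (2 * \<nu>^2 * r))) ^ k)))"
        unfolding Pn_integrand_def by (simp add: sum_distrib_left mult.assoc)
      also have "\<dots> = (\<Sum>k=0..n. A k * HH a c (p k) r)"
      proof (rule sum.cong[OF refl])
        fix k
        have "sabr_F x0 \<beta> r * (y0 / (\<nu> * r powr (3/2) * sqrt (2 * pi)) * (1 / fact k * (- (y0^2 / (2 * \<nu>^2 * r))) ^ k))
           = sabr_F x0 \<beta> r * (A k * r powr (- (real k + 3/2)))"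
          unfolding A_def by (simp only: term_eq[OF r nu])
        also have "\<dots> = A k * HH a c (p k) r"
          using r by (simp add: HH_def F_eq p_def)
        finally show "sabr_F x0 \<beta> r * (y0 / (\<nu> * r powr (3/2) * sqrt (2 * pi)) * (1 / fact k * (- (y0^2 / (2 * \<nu>^2 * r))) ^ k))
           = A k * HH a c (p k) r" .
      qed
      finally show ?thesis using r by simp
    qed
  qed
  have int2: "integrable lborel (\<lambda>r. \<Sum>k=0..n. A k * HH a c (p k) r)" for n
    by (auto intro!: Bochner_Integration.integrable_sum integrable_mult_right HHint)
  have P1: "set_integrable lborel {0<..} (Pn_integrand x0 y0 \<nu> \<beta> n)" for n
    unfolding set_integrable_def G2 by (rule int2)
  have Pnval: "P_n x0 y0 \<nu> \<beta> n = (\<Sum>k=0..n. A k * C k)" for n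
    unfolding P_n_def set_lebesgue_integral_def G2
    by (simp add: integral_sum HHint HHval)
  have P2: "P_n x0 y0 \<nu> \<beta> n = (\<Sum>k=0..n. (-1)^k * b_coef x0 y0 \<nu> \<beta> k)" for n
    unfolding Pnval AC ..
  have bpos: "0 \<le> b_coef x0 y0 \<nu> \<beta> k" for k
  proof -
    have g1: "Gamma (1 / (2 * (1 - \<beta>))) > 0" using b1 by (intro Gamma_real_pos) simp
    have "\<beta> / (2 - 2 * \<beta>) \<ge> 0" using b0 b1 by simp
    then have g2: "Gamma (real k + 1 + \<beta> / (2 - 2 * \<beta>)) > 0" by (intro Gamma_real_pos) linarith
    show ?thesis unfolding b_coef_def using g1 g2 x0 y0 nu b1
      by (intro mult_nonneg_nonneg divide_nonneg_pos zero_le_power) auto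
  qed
  have Cpos: "0 \<le> C k" for k
    unfolding HHval[symmetric] using HH_nonneg[OF a c] by (simp add: integral_nonneg_AE)
  define G1 where "G1 = (\<lambda>r. indicator {0<..} r *\<^sub>R Pinf_integrand x0 y0 \<nu> \<beta> r)"
  have G1eq: "G1 = (\<lambda>r. A 0 * HH a c (p 0) r * exp (- (y0^2 / (2 * \<nu>^2 * r))))"
  proof
    fix r :: real
    show "G1 r = A 0 * HH a c (p 0) r * exp (- (y0^2 / (2 * \<nu>^2 * r)))"
      unfolding G1_def by (cases "r > 0") (simp_all add: HH_def Pinf_integrand_def A_def p_def F_eq)
  qed
  have G1int: "integrable lborel G1"
  proof (rule Bochner_Integration.integrable_bound[OF integrable_mult_right[OF HHint[of 0]]])
    show "G1 \<in> borel_measurable lborel" unfolding G1eq using HH_meas[OF a c] by measurable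
    show "AE r in lborel. norm (G1 r) \<le> norm (A 0 * HH a c (p 0) r)"
    proof (rule AE_I2)
      fix r :: real
      show "norm (G1 r) \<le> norm (A 0 * HH a c (p 0) r)"
      proof (cases "r > 0")
        case False
        then show ?thesis unfolding G1eq by (simp add: HH_def)
      next
        case True
        have "exp (- (y0^2 / (2 * \<nu>^2 * r))) \<le> 1" using True nu by simp
        then show ?thesis unfolding G1eq
          by (simp add: abs_mult mult_left_le)
      qed
    qed
  qed
  have P3: "\<bar>P_inf x0 y0 \<nu> \<beta> - P_n x0 y0 \<nu> \<beta> n\<bar> \<le> b_coef x0 y0 \<nu> \<beta> (n + 1)" for n
  proof -
    define G2 where "G2 = (\<lambda>r. \<Sum>k=0..n. A k * HH a c (p k) r)"
    have pt: "\<bar>G1 r - G2 r\<bar> \<le> \<bar>A (n+1)\<bar> * HH a c (p (n+1)) r" for r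
    proof (cases "r > 0")
      case False
      then show ?thesis unfolding G1eq G2_def by (simp add: HH_def)
    next
      case r: True
      define x where "x = y0^2 / (2 * \<nu>^2 * r)"
      have x: "x \<ge> 0" unfolding x_def using r nu by simp
      define T where "T = y0 / (\<nu> * r powr (3/2) * sqrt (2 * pi))"
      have T: "T \<ge> 0" unfolding T_def using y0 nu r by simp
      have Fn: "sabr_F x0 \<beta> r \<ge> 0" unfolding F_eq using upper_nonneg[OF a] c r by simp
      have e1: "G2 r = Pn_integrand x0 y0 \<nu> \<beta> n r"
        using fun_cong[OF G2[of n], of r] r unfolding G2_def by simp
      have rr: "r powr (-3/2) = 1 / r powr (3/2)"
        using powr_minus_divide[of r "3/2"] by simp
      have e2: "G1 r - G2 r = sabr_F x0 \<beta> r * T * (exp (- x) - (\<Sum>k=0..n. 1 / fact k * (- x) ^ k))"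
        unfolding e1 G1_def Pinf_integrand_def Pn_integrand_def rr using r
        by (simp add: T_def x_def right_diff_distrib mult_ac)
      have "\<bar>G1 r - G2 r\<bar> = sabr_F x0 \<beta> r * T * \<bar>exp (- x) - (\<Sum>k=0..n. 1 / fact k * (- x) ^ k)\<bar>"
        unfolding e2 using Fn T by (simp add: abs_mult)
      also have "\<dots> \<le> sabr_F x0 \<beta> r * T * (x ^ (n + 1) / fact (n + 1))"
        using Fn T exp_taylor_bound[OF x, of n] by (intro mult_left_mono) auto
      also have "\<dots> = \<bar>sabr_F x0 \<beta> r * (T * (1 / fact (n+1) * (- x) ^ (n+1)))\<bar>"
        using Fn T x by (simp add: abs_mult power_abs)
      also have "T * (1 / fact (n+1) * (- x) ^ (n+1)) = A (n+1) * r powr (- (real (n+1) + 3/2))"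
        unfolding T_def x_def A_def by (rule term_eq[OF r nu])
      also have "\<bar>sabr_F x0 \<beta> r * (A (n+1) * r powr (- (real (n+1) + 3/2)))\<bar> = \<bar>A (n+1)\<bar> * HH a c (p (n+1)) r"
        using r Fn unfolding HH_def p_def F_eq by (simp add: abs_mult)
      finally show ?thesis .
    qed
    have "P_inf x0 y0 \<nu> \<beta> - P_n x0 y0 \<nu> \<beta> n = integral\<^sup>L lborel (\<lambda>r. G1 r - G2 r)"
      unfolding P_inf_def P_n_def set_lebesgue_integral_def G1_def[symmetric] G2 G2_def[symmetric]
      using G1int int2[of n] unfolding G2_def by (simp add: Bochner_Integration.integral_diff)
    also have "\<bar>\<dots>\<bar> \<le> integral\<^sup>L lborel (\<lambda>r. \<bar>A (n+1)\<bar> * HH a c (p (n+1)) r)"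
      using G1int int2[of n] HHint[of "n+1"] pt unfolding G2_def
      by (intro integral_abs_bound_integral) auto
    also have "\<dots> = \<bar>A (n+1)\<bar> * C (n+1)" by (simp add: HHval)
    also have "\<dots> = \<bar>A (n+1) * C (n+1)\<bar>" using Cpos[of "n+1"] by (simp add: abs_mult)
    also have "\<dots> = b_coef x0 y0 \<nu> \<beta> (n + 1)" unfolding AC using bpos by (simp add: abs_mult)
    finally show ?thesis .
  qed
  have P4: "P_n x0 y0 \<nu> \<beta> 0 =
        2 * Gamma (1 + \<beta> / (2 - 2 * \<beta>)) / Gamma (1 / (2 - 2 * \<beta>))
        * (y0 * (1 - \<beta>) / (\<nu> * sqrt pi * x0 powr (1 - \<beta>)))"
  proof -
    have e: "2 * (1 - \<beta>) = 2 - 2 * \<beta>" by simp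
    show ?thesis unfolding P2 b_coef_def e by (simp add: mult_ac)
  qed
  show ?thesis using P1 P2 P3 P4 by blast
qed

end
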